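(* Let $e_1,e_2,e_3$ be nonzero integers with $e_1+e_2+e_3=0$, $\gcd(e_1,e_2,e_3)\in\{1,2\}$ and $v_2(e_1)=v_2(e_2)<v_2(e_3)$. Let $(a,b,c)$ be a primitive triple of odd integers with $e_1a^2+e_2b^2+e_3c^2=0$ and $a\equiv b\equiv c\equiv 1\pmod 4$. Let $n$ be a positive integer all of whose prime factors are nonzero quadratic residues modulo each odd prime factor of $e_1e_2e_3$. Then $\frac18(a+b)(b+c)(c+a)$ is an integer congruent to $1$ modulo $4$, and it is a quadratic residue modulo each prime factor of $n$.
   Context: $v_2$ denotes the $2$-adic valuation. *)

theory Defs
  imports "HOL-Number_Theory.Number_Theory"
begin

end

theory Submission
  imports Defs "HOL-Computational_Algebra.Squarefree"
begin

definition rstar :: "int \<Rightarrow> int" where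
  "rstar m = (if m mod 4 = 1 then m else - m)"

lemma rstar_mult:
  fixes r m :: int assumes "odd r" "odd m"
  shows "rstar (r * m) = rstar r * rstar m"
proof -
  have "r mod 4 = 1 \<or> r mod 4 = 3" using assms(1) by presburger
  moreover have "m mod 4 = 1 \<or> m mod 4 = 3" using assms(2) by presburger
  moreover have "(r*m) mod 4 = ((r mod 4) * (m mod 4)) mod 4" by (simp add: mod_mult_eq)
  ultimately show ?thesis unfolding rstar_def by auto
qed

lemma rstar_sq:
  fixes r m :: int assumes "odd r"
  shows "rstar (r^2 * m) = r^2 * rstar m"
proof -
  obtain k where k: "r = 2*k+1" using assms by (metis oddE)
  have "r^2 * m = 4*((k^2+k)*m) + m" unfolding k by (simp add: algebra_simps power2_eq_square)
  then have "(r^2*m) mod 4 = m mod 4" by simp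
  then show ?thesis unfolding rstar_def by auto
qed

lemma QuadRes_mult:
  assumes "QuadRes p a" "QuadRes p b" shows "QuadRes p (a*b)"
proof -
  obtain y z where "[y^2 = a] (mod p)" "[z^2 = b] (mod p)" using assms unfolding QuadRes_def by blast
  then have "[(y*z)^2 = a*b] (mod p)" by (metis cong_mult power_mult_distrib)
  then show ?thesis unfolding QuadRes_def by blast
qed

lemma recip:
  fixes p r :: int
  assumes pp: "prime p" and pr: "prime r" and op: "odd p" and orr: "odd r"
    and nd: "\<not> r dvd p" and qr: "QuadRes r p"
  shows "QuadRes p (rstar r)"
proof -
  have p2: "2 < p" using pp op prime_ge_2_int[OF pp] by (metis dvd_refl order_le_less)
  have r2: "2 < r" using pr orr prime_ge_2_int[OF pr] by (metis dvd_refl order_le_less)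
  have pr_ne: "p \<noteq> r" using nd by auto
  have L: "Legendre p r = 1" unfolding Legendre_def using nd qr by (simp add: cong_0_iff)
  have R: "Legendre p r * Legendre r p = (-1::int) ^ (nat ((p - 1) div 2 * ((r - 1) div 2)))"
    using Quadratic_Reciprocity_int[of p r] pp pr p2 r2 pr_ne by simp
  define h where "h = (p - 1) div 2"
  have h0: "h \<ge> 0" using p2 unfolding h_def by simp
  have r4: "r mod 4 = 1 \<or> r mod 4 = 3" using orr by presburger
  show ?thesis
  proof (cases "r mod 4 = 1")
    case True
    define k where "k = r div 4"
    have k: "(r - 1) div 2 = 2 * k" "k \<ge> 0" using r2 True unfolding k_def by presburger+
    have "nat (h * (2*k)) = 2 * nat (h*k)" using h0 k(2) by (simp add: nat_mult_distrib)
    then have "Legendre r p = 1" using R L k unfolding h_def by simp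
    then have "QuadRes p r" unfolding Legendre_def by (auto split: if_splits)
    then show ?thesis unfolding rstar_def using True by simp
  next
    case False
    then have r3: "r mod 4 = 3" using r4 by simp
    define k where "k = r div 4"
    have k: "(r - 1) div 2 = 2 * k + 1" "k \<ge> 0" using r2 r3 unfolding k_def by presburger+
    have "nat (h * (2*k+1)) = 2 * nat (h*k) + nat h" using h0 k(2)
      by (simp add: nat_mult_distrib nat_add_distrib algebra_simps)
    then have Lr: "Legendre r p = (-1) ^ nat h" using R L k unfolding h_def
      by (simp add: power_add power_mult)
    have np: "int (nat p) = p" using p2 by simp
    have hn: "(nat p - 1) div 2 = nat h" unfolding h_def using p2 by (simp add: nat_div_distrib)
    have E1: "[Legendre r p = r ^ nat h] (mod p)"
      using euler_criterion[of "nat p" r] pp p2 np hn by simp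
    have E2: "[Legendre (-r) p = (-r) ^ nat h] (mod p)"
      using euler_criterion[of "nat p" "-r"] pp p2 np hn by simp
    have "[(-1) ^ nat h * (-1) ^ nat h = (-1) ^ nat h * r ^ nat h] (mod p)"
      using cong_scalar_left[OF E1[unfolded Lr], of "(-1) ^ nat h"] by simp
    moreover have "(-1::int) ^ nat h * (-1) ^ nat h = 1" by (simp add: power_mult_distrib[symmetric])
    moreover have "(-r) ^ nat h = (-1) ^ nat h * r ^ nat h" by (simp add: power_mult_distrib[symmetric])
    ultimately have "[Legendre (-r) p = 1] (mod p)" using E2 cong_sym cong_trans by metis
    moreover have "Legendre (-r) p \<in> {0, 1, -1}" unfolding Legendre_def by auto
    moreover have "\<not> [0 = 1] (mod p)" using p2 by (simp add: cong_def)
    moreover have "\<not> [-1 = 1] (mod p)" using p2 by (simp add: cong_def zmod_minus1)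
    ultimately have "Legendre (-r) p = 1" by auto
    then have "QuadRes p (-r)" unfolding Legendre_def by (auto split: if_splits)
    then show ?thesis unfolding rstar_def using r3 by simp
  qed
qed


lemma core:
  fixes p M :: int
  shows "odd M \<Longrightarrow> (\<forall>r. prime r \<and> odd (multiplicity r M) \<longrightarrow> QuadRes p (rstar r))
         \<Longrightarrow> QuadRes p (rstar M)"
proof (induction "nat \<bar>M\<bar>" arbitrary: M rule: less_induct)
  case less
  have M0: "M \<noteq> 0" using less.prems(1) by auto
  show ?case
  proof (cases "\<bar>M\<bar> = 1")
    case True
    then have "M = 1 \<or> M = -1" by auto
    then have "rstar M = 1" unfolding rstar_def by auto
    then show ?thesis unfolding QuadRes_def by (metis cong_refl power_one)
  next
    case False
    then have "\<not> is_unit M" by simp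
    then obtain r where r: "r dvd M" "prime r" using prime_divisor_exists[OF M0] by blast
    have r2: "r \<ge> 2" using prime_ge_2_int[OF r(2)] .
    have ro: "odd r" using r(1) less.prems(1) by (meson dvd_trans)
    show ?thesis
    proof (cases "r^2 dvd M")
      case True
      then obtain M1 where M1: "M = r^2 * M1" by (metis dvdE)
      have M10: "M1 \<noteq> 0" using M0 M1 by auto
      have oM1: "odd M1" using less.prems(1) M1 by simp
      have "\<bar>M\<bar> = r^2 * \<bar>M1\<bar>" using M1 by (simp add: abs_mult)
      moreover have "2*2 \<le> r*r" using mult_mono[OF r2 r2] r2 by simp
      moreover have "4 * \<bar>M1\<bar> \<le> r^2 * \<bar>M1\<bar>" using calculation by (intro mult_right_mono) (auto simp: power2_eq_square)
      moreover have "\<bar>M1\<bar> > 0" using M10 by simp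
      ultimately have "\<bar>M1\<bar> < \<bar>M\<bar>" by linarith
      then have lt: "nat \<bar>M1\<bar> < nat \<bar>M\<bar>" by simp
      have mult: "multiplicity q M = 2 * multiplicity q r + multiplicity q M1" if "prime q" for q
      proof -
        have r0: "r \<noteq> 0" using r(2) by auto
        have pe: "prime_elem q" using that by auto
        have "multiplicity q M = multiplicity q (r^2) + multiplicity q M1"
          using M1 prime_elem_multiplicity_mult_distrib[OF pe, of "r^2" M1] M10 r0 by simp
        then show ?thesis using prime_elem_multiplicity_power_distrib[OF pe r0, of 2] by simp
      qed
      have "QuadRes p (rstar M1)"
      proof (rule less.hyps[OF lt oM1], intro allI impI)
        fix q assume "prime q \<and> odd (multiplicity q M1)"
        then show "QuadRes p (rstar q)" using less.prems(2) mult by auto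
      qed
      moreover have "QuadRes p (r^2)" unfolding QuadRes_def using cong_refl by blast
      ultimately show ?thesis using M1 rstar_sq[OF ro] QuadRes_mult by metis
    next
      case False
      then obtain M1 where M1: "M = r * M1" using r(1) by (metis dvdE)
      have M10: "M1 \<noteq> 0" using M0 M1 by auto
      have oM1: "odd M1" using less.prems(1) M1 by simp
      have nd: "\<not> r dvd M1" using False M1 by (simp add: power2_eq_square)
      have "\<bar>M\<bar> = r * \<bar>M1\<bar>" using M1 r2 by (simp add: abs_mult)
      moreover have "2 * \<bar>M1\<bar> \<le> r * \<bar>M1\<bar>" using r2 by (intro mult_right_mono) auto
      moreover have "\<bar>M1\<bar> > 0" using M10 by simp
      ultimately have "\<bar>M1\<bar> < \<bar>M\<bar>" by linarith
      then have lt: "nat \<bar>M1\<bar> < nat \<bar>M\<bar>" by simp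
      have mult: "multiplicity q M = multiplicity q r + multiplicity q M1" if "prime q" for q
      proof -
        have r0: "r \<noteq> 0" using r(2) by auto
        have pe: "prime_elem q" using that by auto
        show ?thesis
          using M1 prime_elem_multiplicity_mult_distrib[OF pe r0 M10] by simp
      qed
      have "multiplicity r M = 1" using mult[OF r(2)] nd r(2)
        by (simp add: not_dvd_imp_multiplicity_0 multiplicity_prime[OF prime_imp_prime_elem[OF r(2)]])
      then have qr: "QuadRes p (rstar r)" using less.prems(2) r(2) by auto
      have "QuadRes p (rstar M1)"
      proof (rule less.hyps[OF lt oM1], intro allI impI)
        fix q assume q: "prime q \<and> odd (multiplicity q M1)"
        show "QuadRes p (rstar q)"
        proof (cases "q = r")
          case True
          then show ?thesis using qr by simp
        next
          case False
          then have "\<not> q dvd r" using q r(2) primes_dvd_imp_eq by blast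
          then have "multiplicity q r = 0" by (simp add: not_dvd_imp_multiplicity_0)
          then show ?thesis using q mult less.prems(2) by auto
        qed
      qed
      then show ?thesis using qr M1 rstar_mult[OF ro oM1] QuadRes_mult by metis
    qed
  qed
qed

lemma val_eq:
  fixes r x y z e1 e2 e3 :: int
  assumes pr: "prime r" and nz: "\<not> r dvd z" and n1: "\<not> r dvd e1" and n2: "\<not> r dvd e2"
    and x0: "x \<noteq> 0" and y0: "y \<noteq> 0" and eq0: "e1*y*z + e2*z*x + e3*x*y = 0"
  shows "multiplicity r x = multiplicity r y"
proof -
  define w where "w = -(e1*z + e3*x)"
  have eq: "(e2*z)*x = y * w" using eq0 unfolding w_def by (simp add: algebra_simps)
  have e2z: "e2*z \<noteq> 0" using n2 nz by auto
  have ndz: "\<not> r dvd e2*z" using pr n2 nz by (simp add: prime_dvd_mult_iff)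
  have m1: "multiplicity r (e2*z*x) = multiplicity r x"
    using prime_elem_multiplicity_mult_distrib[OF prime_imp_prime_elem[OF pr] e2z x0] ndz
    by (simp add: not_dvd_imp_multiplicity_0)
  have w0: "w \<noteq> 0" using eq e2z x0 by auto
  have m2: "multiplicity r (y*w) = multiplicity r y + multiplicity r w"
    using prime_elem_multiplicity_mult_distrib[OF prime_imp_prime_elem[OF pr] y0 w0] .
  show ?thesis
  proof (cases "r dvd x")
    case True
    have "\<not> r dvd w"
    proof
      assume "r dvd w"
      then have "r dvd e1*z" using True unfolding w_def
        by (metis dvd_minus_iff dvd_mult add_diff_cancel_right' dvd_diff)
      then show False using pr n1 nz by (simp add: prime_dvd_mult_iff)
    qed
    then show ?thesis using m1 m2 eq by (simp add: not_dvd_imp_multiplicity_0)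
  next
    case False
    then show ?thesis using m1 m2 eq by (simp add: not_dvd_imp_multiplicity_0)
  qed
qed

lemma mult_even:
  fixes r x y z e1 e2 e3 :: int
  assumes pr: "prime r" and n1: "\<not> r dvd e1" and n2: "\<not> r dvd e2" and n3: "\<not> r dvd e3"
    and x0: "x \<noteq> 0" and y0: "y \<noteq> 0" and z0: "z \<noteq> 0"
    and nall: "\<not> (r dvd x \<and> r dvd y \<and> r dvd z)"
    and eq0: "e1*y*z + e2*z*x + e3*x*y = 0"
  shows "even (multiplicity r (x*y*z))"
proof -
  have m: "multiplicity r (x*y*z) = multiplicity r x + multiplicity r y + multiplicity r z"
    using prime_elem_multiplicity_mult_distrib[OF prime_imp_prime_elem[OF pr], of "x*y" z]
      prime_elem_multiplicity_mult_distrib[OF prime_imp_prime_elem[OF pr], of x y] x0 y0 z0 by simp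
  consider "\<not> r dvd z" | "\<not> r dvd x" | "\<not> r dvd y" using nall by blast
  then show ?thesis
  proof cases
    case 1
    have "multiplicity r x = multiplicity r y" using val_eq[OF pr 1 n1 n2 x0 y0 eq0] .
    then show ?thesis using m 1 by (simp add: not_dvd_imp_multiplicity_0)
  next
    case 2
    have "e2*z*x + e3*x*y + e1*y*z = 0" using eq0 by simp
    then have "multiplicity r y = multiplicity r z" using val_eq[OF pr 2 n2 n3 y0 z0] by simp
    then show ?thesis using m 2 by (simp add: not_dvd_imp_multiplicity_0)
  next
    case 3
    have "e3*x*y + e1*y*z + e2*z*x = 0" using eq0 by simp
    then have "multiplicity r z = multiplicity r x" using val_eq[OF pr 3 n3 n1 z0 x0] by simp
    then show ?thesis using m 3 by (simp add: not_dvd_imp_multiplicity_0)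
  qed
qed


theorem lemma2p8:
  fixes e1 e2 e3 a b c n :: int
  assumes "e1 \<noteq> 0" "e2 \<noteq> 0" "e3 \<noteq> 0"
    and "e1 + e2 + e3 = 0"
    and "gcd e1 (gcd e2 e3) \<in> {1, 2}"
    and "multiplicity 2 e1 = multiplicity 2 e2"
    and "multiplicity 2 e2 < multiplicity 2 e3"
    and "gcd a (gcd b c) = 1"
    and "odd a" "odd b" "odd c"
    and "e1 * a^2 + e2 * b^2 + e3 * c^2 = 0"
    and "[a = 1] (mod 4)" "[b = 1] (mod 4)" "[c = 1] (mod 4)"
    and "n > 0"
    and "\<forall>p q. prime p \<and> p dvd n \<and> prime q \<and> odd q \<and> q dvd e1 * e2 * e3
           \<longrightarrow> \<not> q dvd p \<and> QuadRes q p"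
  shows "8 dvd (a + b) * (b + c) * (c + a)
         \<and> [(a + b) * (b + c) * (c + a) div 8 = 1] (mod 4)
         \<and> (\<forall>p. prime p \<and> p dvd n \<longrightarrow> QuadRes p ((a + b) * (b + c) * (c + a) div 8))"
proof -
  define a' where "a' = a div 4"
  define b' where "b' = b div 4"
  define c' where "c' = c div 4"
  have ha: "a = 4*a' + 1" using assms(13) unfolding a'_def cong_def by presburger
  have hb: "b = 4*b' + 1" using assms(14) unfolding b'_def cong_def by presburger
  have hc: "c = 4*c' + 1" using assms(15) unfolding c'_def cong_def by presburger
  define x where "x = 2*(b'+c') + 1"
  define y where "y = 2*(c'+a') + 1"
  define z where "z = 2*(a'+b') + 1"
  have prod: "(a + b) * (b + c) * (c + a) = 8 * (x*y*z)"
    unfolding x_def y_def z_def ha hb hc by (simp add: algebra_simps)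
  have N: "(a + b) * (b + c) * (c + a) div 8 = x*y*z" using prod by simp
  have ox: "odd x" and oy: "odd y" and oz: "odd z" unfolding x_def y_def z_def by simp_all
  have oN: "odd (x*y*z)" using ox oy oz by simp
  define K where "K = a'+b'+c' + (b'+c')*(c'+a') + (c'+a')*(a'+b') + (a'+b')*(b'+c')
     + 2*(b'+c')*(c'+a')*(a'+b')"
  have xyzK: "x*y*z = 4*K + 1" unfolding x_def y_def z_def K_def by (simp add: algebra_simps)
  have mod4: "[x*y*z = 1] (mod 4)" unfolding xyzK cong_def by simp
  have rs: "rstar (x*y*z) = x*y*z" unfolding rstar_def xyzK by simp
  have abc: "a = y + z - x" "b = z + x - y" "c = x + y - z"
    unfolding x_def y_def z_def ha hb hc by simp_all
  have e3: "e3 = - e1 - e2" using assms(4) by simp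
  have "4*(e1*y*z + e2*z*x + e3*x*y) = e1 * a^2 + e2 * b^2 + e3 * c^2"
    unfolding abc e3 by (simp add: algebra_simps power2_eq_square)
  then have eq0: "e1*y*z + e2*z*x + e3*x*y = 0" using assms(12) by simp
  have x0: "x \<noteq> 0" and y0: "y \<noteq> 0" and z0: "z \<noteq> 0" using ox oy oz by auto
  have nall: "\<not> (r dvd x \<and> r dvd y \<and> r dvd z)" if r: "prime r" for r
  proof
    assume h: "r dvd x \<and> r dvd y \<and> r dvd z"
    then have "r dvd a" "r dvd b" "r dvd c" unfolding abc by auto
    then have "r dvd gcd a (gcd b c)" by simp
    then show False using assms(8) r prime_ge_2_int[OF r] by simp
  qed
  have QR: "QuadRes p (x*y*z)" if p: "prime p" "p dvd n" for p
  proof (cases "p = 2")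
    case True
    have "(x*y*z) mod 2 = 1" using oN odd_iff_mod_2_eq_one by blast
    then have "[1^2 = x*y*z] (mod p)" using True unfolding cong_def by simp
    then show ?thesis unfolding QuadRes_def by blast
  next
    case False
    have op: "odd p" using p(1) False prime_ge_2_int[OF p(1)] prime_odd_int by force
    have "QuadRes p (rstar (x*y*z))"
    proof (rule core[OF oN], intro allI impI)
      fix r assume r: "prime r \<and> odd (multiplicity r (x*y*z))"
      have rdvd: "r dvd e1*e2*e3"
      proof (rule ccontr)
        assume "\<not> r dvd e1*e2*e3"
        then have "\<not> r dvd e1" "\<not> r dvd e2" "\<not> r dvd e3" by auto
        then have "even (multiplicity r (x*y*z))"
          using mult_even[OF _ _ _ _ x0 y0 z0 nall eq0] r by blast
        then show False using r by simp
      qed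
      have "r dvd x*y*z" using r by (metis not_dvd_imp_multiplicity_0 odd_pos not_gr0)
      then have or: "odd r" using oN by (meson dvd_trans even_mult_iff)
      have "\<not> r dvd p \<and> QuadRes r p" using assms(17) p r or rdvd by blast
      then show "QuadRes p (rstar r)" using recip[OF p(1) _ op or] r by blast
    qed
    then show ?thesis using rs by simp
  qed
  show ?thesis using prod N mod4 QR by simp
qed

end
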